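(* Let $F$ be a forest and let $X$ be a multiset of vertices of $F$. Then there is at most one linear forest that is a subgraph of $F$ with end-multiset equal to $X$.
   Context: A multiset is a set together with a positive integer multiplicity assigned to each member. A linear forest is a forest in which every component is a path. The end-multiset of a linear forest $H$ is the multiset of ends of the components of $H$, where an end of a component $P$ has multiplicity one if $P$ has at least one edge, and multiplicity two if $P$ has no edges. *)

theory Defs
  imports Main "HOL-Library.Multiset"
begin

definition graph :: "'a set \<Rightarrow> 'a set set \<Rightarrow> bool" where
  "graph V E \<longleftrightarrow> finite V \<and> (\<forall>e\<in>E. e \<subseteq> V \<and> card e = 2)"

definition adj :: "'a set set \<Rightarrow> 'a \<Rightarrow> 'a \<Rightarrow> bool" where
  "adj E u v \<longleftrightarrow> {u, v} \<in> E"

definition is_cycle :: "'a set set \<Rightarrow> 'a list \<Rightarrow> bool" where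
  "is_cycle E vs \<longleftrightarrow> length vs \<ge> 3 \<and> distinct vs
     \<and> (\<forall>i. Suc i < length vs \<longrightarrow> adj E (vs ! i) (vs ! Suc i))
     \<and> adj E (last vs) (hd vs)"

definition forest :: "'a set \<Rightarrow> 'a set set \<Rightarrow> bool" where
  "forest V E \<longleftrightarrow> graph V E \<and> \<not> (\<exists>vs. set vs \<subseteq> V \<and> is_cycle E vs)"

definition subgraph :: "'a set \<Rightarrow> 'a set set \<Rightarrow> 'a set \<Rightarrow> 'a set set \<Rightarrow> bool" where
  "subgraph V' E' V E \<longleftrightarrow> graph V' E' \<and> V' \<subseteq> V \<and> E' \<subseteq> E"

definition component :: "'a set \<Rightarrow> 'a set set \<Rightarrow> 'a \<Rightarrow> 'a set" where
  "component V E v = {w \<in> V. (adj E)\<^sup>*\<^sup>* v w}"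

definition components :: "'a set \<Rightarrow> 'a set set \<Rightarrow> 'a set set" where
  "components V E = component V E ` V"

definition path_of :: "'a set set \<Rightarrow> 'a set \<Rightarrow> 'a list \<Rightarrow> bool" where
  "path_of E C ps \<longleftrightarrow> ps \<noteq> [] \<and> distinct ps \<and> set ps = C
     \<and> {e \<in> E. e \<subseteq> C} = {{ps ! i, ps ! Suc i} | i. Suc i < length ps}"

definition linear_forest :: "'a set \<Rightarrow> 'a set set \<Rightarrow> bool" where
  "linear_forest V E \<longleftrightarrow> forest V E \<and> (\<forall>C\<in>components V E. \<exists>ps. path_of E C ps)"

text \<open>Ends of a path component: its two endpoints; a one-vertex path gives its vertex twice.\<close>
definition comp_ends :: "'a set set \<Rightarrow> 'a set \<Rightarrow> 'a multiset" where
  "comp_ends E C = (let ps = (SOME ps. path_of E C ps) in {#hd ps, last ps#})"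

definition end_mset :: "'a set \<Rightarrow> 'a set set \<Rightarrow> 'a multiset" where
  "end_mset V E = (\<Sum>C\<in>components V E. comp_ends E C)"

end

theory Submission
  imports Defs
begin

definition dg :: "'a set set \<Rightarrow> 'a \<Rightarrow> nat" where
  "dg F v = card {e\<in>F. v \<in> e}"

lemma adj_sym: "adj E u v = adj E v u"
  by (simp add: adj_def insert_commute)

lemma rtr_sym: "(adj E)\<^sup>*\<^sup>* u v \<Longrightarrow> (adj E)\<^sup>*\<^sup>* v u"
proof (induction rule: rtranclp_induct)
  case base then show ?case by simp
next
  case (step y z)
  then show ?case using adj_sym[of E y z]
    by (metis converse_rtranclp_into_rtranclp)
qed

lemma comp_eq:
  assumes "C \<in> components V E" "v \<in> C"
  shows "C = component V E v"
proof -
  obtain x where x: "x \<in> V" "C = component V E x" using assms(1) unfolding components_def by auto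
  have xv: "(adj E)\<^sup>*\<^sup>* x v" "v \<in> V" using assms(2) x unfolding component_def by auto
  show ?thesis unfolding x component_def
    using xv rtr_sym[OF xv(1)] by (auto intro: rtranclp_trans)
qed

lemma card2_other: "card e = 2 \<Longrightarrow> v \<in> e \<Longrightarrow> \<exists>w. w \<noteq> v \<and> e = {v,w}"
  by (auto simp: card_2_iff insert_commute)

lemma edges_at:
  assumes "distinct ps" "k < length ps"
  shows "{e \<in> {{ps!i, ps!Suc i}|i. Suc i < length ps}. ps!k \<in> e} =
    (if 0<k then {{ps!(k-1), ps!k}} else {}) \<union> (if Suc k < length ps then {{ps!k, ps!Suc k}} else {})"
  (is "?L = ?R")
proof
  show "?L \<subseteq> ?R"
  proof
    fix e assume "e \<in> ?L"
    then obtain i where i: "Suc i < length ps" "e = {ps!i, ps!Suc i}" "ps!k \<in> e" by auto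
    then have "ps!k = ps!i \<or> ps!k = ps!Suc i" by auto
    then have "k = i \<or> k = Suc i" using assms i by (auto simp: nth_eq_iff_index_eq)
    then show "e \<in> ?R" using i by auto
  qed
next
  show "?R \<subseteq> ?L"
  proof
    fix e assume "e \<in> ?R"
    then consider "0 < k" "e = {ps!(k-1), ps!k}" | "Suc k < length ps" "e = {ps!k, ps!Suc k}"
      by (auto split: if_splits)
    then show "e \<in> ?L"
    proof cases
      case 1
      then have "e = {ps!(k-1), ps!Suc (k-1)}" "Suc (k-1) < length ps" using assms by auto
      then have "e \<in> {{ps!i, ps!Suc i}|i. Suc i < length ps}" by blast
      moreover have "ps!k \<in> e" using 1 by simp
      ultimately show ?thesis by blast
    next
      case 2 then show ?thesis by blast
    qed
  qed
qed

lemma path_sum: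
  assumes "distinct ps" "k < length ps"
  shows "card {e \<in> {{ps!i, ps!Suc i}|i. Suc i < length ps}. ps!k \<in> e}
     + count {#hd ps, last ps#} (ps!k) = 2"
proof -
  have ne: "ps \<noteq> []" using assms by auto
  have hd: "hd ps = ps!0" using ne by (simp add: hd_conv_nth)
  have lst: "last ps = ps!(length ps - 1)" using ne by (simp add: last_conv_nth)
  have c: "count {#hd ps, last ps#} (ps!k) = (if k = 0 then 1 else 0) + (if k = length ps - 1 then 1 else 0)"
  proof -
    have l0: "0 < length ps" "length ps - 1 < length ps" using assms by auto
    have e0: "(ps!0 = ps!k) = (0 = k)" by (rule nth_eq_iff_index_eq[OF assms(1) l0(1) assms(2)])
    have e1: "(ps!(length ps - 1) = ps!k) = (length ps - 1 = k)"
      by (rule nth_eq_iff_index_eq[OF assms(1) l0(2) assms(2)])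
    have h0: "ps!0 = ps!k \<longleftrightarrow> k = 0" "ps!k = ps!0 \<longleftrightarrow> k = 0"
      using e0 by auto
    have hl: "ps!(length ps - 1) = ps!k \<longleftrightarrow> k = length ps - 1" "ps!k = ps!(length ps - 1) \<longleftrightarrow> k = length ps - 1"
      using e1 by auto
    have cnt: "count {#a,b#} x = (if x = a then 1 else 0) + (if x = b then 1 else 0)" for a b x :: 'a
      by simp
    show ?thesis unfolding hd lst cnt h0(2) hl(2) by simp
  qed
  have d: "card ((if 0<k then {{ps!(k-1), ps!k}} else {}) \<union> (if Suc k < length ps then {{ps!k, ps!Suc k}} else {}))
     = (if 0<k then 1 else 0) + (if Suc k < length ps then 1 else 0)"
  proof (cases "0 < k \<and> Suc k < length ps")
    case True
    have "ps!(k-1) \<noteq> ps!Suc k" "ps!(k-1) \<noteq> ps!k" using True assms by (auto simp: nth_eq_iff_index_eq)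
    then have "{ps!(k-1), ps!k} \<noteq> {ps!k, ps!Suc k}" by (metis insert_iff doubleton_eq_iff)
    then show ?thesis using True by auto
  next
    case False then show ?thesis by auto
  qed
  show ?thesis unfolding edges_at[OF assms] d c using assms by auto
qed

lemma lf_graph: "linear_forest V E \<Longrightarrow> graph V E"
  by (simp add: linear_forest_def forest_def)

lemma comp_ends_sub:
  assumes "linear_forest V E" "C \<in> components V E"
  shows "path_of E C (SOME ps. path_of E C ps)" "set_mset (comp_ends E C) \<subseteq> C"
proof -
  have "\<exists>ps. path_of E C ps" using assms unfolding linear_forest_def by auto
  then show p: "path_of E C (SOME ps. path_of E C ps)" by (rule someI_ex)
  then show "set_mset (comp_ends E C) \<subseteq> C" unfolding comp_ends_def Let_def path_of_def
    by auto
qed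

lemma comp_sub: "C \<in> components V E \<Longrightarrow> C \<subseteq> V"
  by (auto simp: components_def component_def)

lemma lf_count:
  assumes "linear_forest V E"
  shows "count (end_mset V E) v = (if v \<in> V then count (comp_ends E (component V E v)) v else 0)"
proof -
  have fin: "finite (components V E)" using lf_graph[OF assms]
    by (simp add: graph_def components_def)
  have z: "count (comp_ends E C) v = 0" if "C \<in> components V E" "v \<notin> C" for C
    using comp_ends_sub(2)[OF assms that(1)] that(2) by (meson count_eq_zero_iff subsetD)
  have s: "count (end_mset V E) v = (\<Sum>C\<in>components V E. count (comp_ends E C) v)"
    unfolding end_mset_def by (simp add: count_sum)
  show ?thesis
  proof (cases "v \<in> V")
    case True
    have vc: "v \<in> component V E v" using True by (simp add: component_def)
    have cc: "component V E v \<in> components V E" using True by (simp add: components_def)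
    have "(\<Sum>C\<in>components V E. count (comp_ends E C) v) = count (comp_ends E (component V E v)) v
       + (\<Sum>C\<in>components V E - {component V E v}. count (comp_ends E C) v)"
      using sum.remove[OF fin cc] by simp
    also have "(\<Sum>C\<in>components V E - {component V E v}. count (comp_ends E C) v) = 0"
      by (rule sum.neutral) (metis DiffE comp_eq insertI1 z)
    finally show ?thesis using s True by simp
  next
    case False
    have "(\<Sum>C\<in>components V E. count (comp_ends E C) v) = 0"
      by (rule sum.neutral) (meson False comp_sub subsetD z)
    then show ?thesis using s False by simp
  qed
qed

lemma lf_deg:
  assumes "linear_forest V E"
  shows "v \<in> V \<Longrightarrow> count (end_mset V E) v + dg E v = 2"
    and "v \<notin> V \<Longrightarrow> count (end_mset V E) v = 0 \<and> dg E v = 0"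
proof -
  have g: "graph V E" using lf_graph[OF assms] .
  show "v \<notin> V \<Longrightarrow> count (end_mset V E) v = 0 \<and> dg E v = 0"
  proof -
    assume v: "v \<notin> V"
    have "{e\<in>E. v \<in> e} = {}" using g v unfolding graph_def by auto
    then have "dg E v = 0" unfolding dg_def by (metis card.empty)
    then show ?thesis using lf_count[OF assms] v by simp
  qed
  assume v: "v \<in> V"
  define C where "C = component V E v"
  define ps where "ps = (SOME ps. path_of E C ps)"
  have cc: "C \<in> components V E" using v by (simp add: components_def C_def)
  have vC: "v \<in> C" using v by (simp add: component_def C_def)
  have p: "path_of E C ps" using comp_ends_sub(1)[OF assms cc] by (simp add: ps_def)
  have "{e\<in>E. v \<in> e} = {e\<in>{e\<in>E. e \<subseteq> C}. v \<in> e}"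
  proof (rule set_eqI, rule iffI)
    fix e assume e: "e \<in> {e\<in>E. v \<in> e}"
    then have "e \<in> E" "v \<in> e" by simp_all
    then have "card e = 2" using g unfolding graph_def by simp
    then obtain w where w: "e = {v,w}" using card2_other[OF _ \<open>v \<in> e\<close>] by metis
    have "w \<in> V" using e g w unfolding graph_def by auto
    moreover have "adj E v w" using e w by (simp add: adj_def)
    ultimately have "w \<in> C" unfolding C_def component_def by auto
    then show "e \<in> {e\<in>{e\<in>E. e \<subseteq> C}. v \<in> e}" using e w vC by auto
  qed auto
  also have "\<dots> = {e \<in> {{ps!i, ps!Suc i}|i. Suc i < length ps}. v \<in> e}"
    using p unfolding path_of_def by simp
  finally have de: "{e\<in>E. v \<in> e} = {e \<in> {{ps!i, ps!Suc i}|i. Suc i < length ps}. v \<in> e}" .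
  obtain k where k: "k < length ps" "v = ps!k" using p vC unfolding path_of_def
    by (metis in_set_conv_nth)
  have ce: "comp_ends E C = {#hd ps, last ps#}" by (simp add: comp_ends_def ps_def Let_def)
  have cnt: "count (end_mset V E) v = count {#hd ps, last ps#} v"
    using lf_count[OF assms, of v] v ce unfolding C_def by simp
  have ds: "distinct ps" using p unfolding path_of_def by blast
  have "card {e\<in>E. v \<in> e} + count {#hd ps, last ps#} v = 2"
    unfolding de unfolding k(2) by (rule path_sum[OF ds k(1)])
  then show "count (end_mset V E) v + dg E v = 2"
    unfolding dg_def cnt by simp
qed

lemma sing: "x \<in> S \<Longrightarrow> (\<And>e. e \<in> S \<Longrightarrow> e = x) \<Longrightarrow> S = {x}"
  by blast

lemma forest_even:
  assumes "forest V E" "F \<subseteq> E" "F \<noteq> {}" "\<And>v. even (dg F v)"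
  shows False
proof -
  have g: "graph V E" using assms(1) by (simp add: forest_def)
  have finV: "finite V" using g by (simp add: graph_def)
  have finF: "finite F" using g assms(2) finite_subset[of F "Pow V"] finV unfolding graph_def by auto
  define P where "P ps \<longleftrightarrow> distinct ps \<and> set ps \<subseteq> V \<and> (\<forall>i. Suc i < length ps \<longrightarrow> {ps!i, ps!Suc i} \<in> F)
     \<and> length ps \<ge> 2" for ps
  obtain e0 where e0: "e0 \<in> F" using assms(3) by auto
  then have "e0 \<subseteq> V" "card e0 = 2" using g assms(2) unfolding graph_def by auto
  then obtain a b where ab: "e0 = {a,b}" "a \<noteq> b" by (auto simp: card_2_iff)
  have "P [a,b]" unfolding P_def using ab e0 \<open>e0 \<subseteq> V\<close> by (auto simp: less_Suc_eq)
  then have ex: "\<exists>ps. P ps \<and> length ps = 2" by auto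
  have bd: "\<forall>n. (\<exists>ps. P ps \<and> length ps = n) \<longrightarrow> n \<le> card V"
  proof (intro allI impI)
    fix n assume "\<exists>ps. P ps \<and> length ps = n"
    then obtain qs where qs: "P qs" "length qs = n" by blast
    then have "length qs = card (set qs)" unfolding P_def by (simp add: distinct_card)
    also have "\<dots> \<le> card V" using qs(1) finV unfolding P_def by (simp add: card_mono)
    finally show "n \<le> card V" using qs by simp
  qed
  obtain n where n: "\<exists>ps. P ps \<and> length ps = n" "\<forall>m. (\<exists>ps. P ps \<and> length ps = m) \<longrightarrow> m \<le> n"
    using Nat.ex_has_greatest_nat[of "\<lambda>n. \<exists>ps. P ps \<and> length ps = n", OF ex bd] by blast
  then obtain ps where ps: "P ps" "length ps = n" by blast
  define u where "u = ps!0"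
  define b where "b = ps!1"
  have "Suc 0 < length ps" using ps unfolding P_def by simp
  then have ub: "{u,b} \<in> F" using ps(1) unfolding P_def u_def b_def by simp
  have "\<exists>e\<in>F. u \<in> e \<and> e \<noteq> {u,b}"
  proof (rule ccontr)
    assume nt: "\<not> ?thesis"
    have "{e\<in>F. u \<in> e} = {{u,b}}"
    proof (rule sing)
      show "{u,b} \<in> {e\<in>F. u \<in> e}" using ub by simp
      fix e assume "e \<in> {e\<in>F. u \<in> e}"
      then have "e \<in> F" "u \<in> e" by simp_all
      then show "e = {u,b}" using nt by metis
    qed
    then show False using assms(4)[of u] by (simp add: dg_def)
  qed
  then obtain e where e: "e \<in> F" "u \<in> e" "e \<noteq> {u,b}" by blast
  then have "e \<subseteq> V" "card e = 2" using g assms(2) unfolding graph_def by auto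
  then obtain w where w: "w \<noteq> u" "e = {u,w}" using card2_other e by metis
  have wb: "w \<noteq> b" using w e by auto
  have wV: "w \<in> V" using w \<open>e \<subseteq> V\<close> by auto
  have "w \<in> set ps"
  proof (rule ccontr)
    assume nw: "w \<notin> set ps"
    have "P (w # ps)" unfolding P_def
    proof (intro conjI allI impI)
      show "distinct (w # ps)" using nw ps unfolding P_def by auto
      show "set (w # ps) \<subseteq> V" using wV ps unfolding P_def by auto
      show "2 \<le> length (w # ps)" using ps unfolding P_def by auto
      fix i assume i: "Suc i < length (w # ps)"
      show "{(w # ps) ! i, (w # ps) ! Suc i} \<in> F"
      proof (cases i)
        case 0 then show ?thesis using e w by (simp add: u_def insert_commute)
      next
        case (Suc j) then show ?thesis using i ps unfolding P_def by auto
      qed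
    qed
    then have "length (w # ps) \<le> n" using n(2) by blast
    then show False using ps(2) by simp
  qed
  then obtain j where j: "j < length ps" "w = ps!j" by (metis in_set_conv_nth)
  have j2: "j \<ge> 2"
  proof -
    have "j \<noteq> 0"
    proof
      assume "j = 0" then show False using j(2) w(1) unfolding u_def by simp
    qed
    moreover have "j \<noteq> 1"
    proof
      assume "j = 1" then show False using j(2) wb unfolding b_def by simp
    qed
    ultimately show ?thesis by linarith
  qed
  define vs where "vs = take (Suc j) ps"
  have "is_cycle E vs" unfolding is_cycle_def
  proof (intro conjI allI impI)
    show "3 \<le> length vs" using j j2 by (simp add: vs_def)
    show "distinct vs" using ps unfolding P_def vs_def by simp
    fix i assume "Suc i < length vs"
    then have "Suc i < length ps" "Suc i < Suc j" using j by (auto simp: vs_def)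
    then show "adj E (vs!i) (vs!Suc i)" using ps assms(2) unfolding P_def vs_def adj_def by auto
  next
    have "last vs = w" using j by (simp add: vs_def take_Suc_conv_app_nth)
    moreover have "hd vs = u" using j by (cases ps) (simp_all add: vs_def u_def)
    ultimately show "adj E (last vs) (hd vs)" using e w assms(2)
      by (auto simp: adj_def insert_commute)
  qed
  moreover have "set vs \<subseteq> V" using ps unfolding P_def vs_def by (meson order_trans set_take_subset)
  ultimately show False using assms(1) unfolding forest_def by blast
qed

theorem mainTheorem17:
  fixes V :: "'a set" and E :: "'a set set" and X :: "'a multiset"
  assumes "forest V E"
    and "set_mset X \<subseteq> V"
  shows "\<forall>V1 E1 V2 E2.
           linear_forest V1 E1 \<and> subgraph V1 E1 V E \<and> end_mset V1 E1 = X \<and>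
           linear_forest V2 E2 \<and> subgraph V2 E2 V E \<and> end_mset V2 E2 = X
           \<longrightarrow> V1 = V2 \<and> E1 = E2"
proof (intro allI impI)
  fix V1 E1 V2 E2
  assume h: "linear_forest V1 E1 \<and> subgraph V1 E1 V E \<and> end_mset V1 E1 = X \<and>
           linear_forest V2 E2 \<and> subgraph V2 E2 V E \<and> end_mset V2 E2 = X"
  then have l1: "linear_forest V1 E1" and s1: "subgraph V1 E1 V E" and x1: "end_mset V1 E1 = X"
    and l2: "linear_forest V2 E2" and s2: "subgraph V2 E2 V E" and x2: "end_mset V2 E2 = X"
    by simp_all
  have q1: "(v \<in> V1 \<longrightarrow> count X v + dg E1 v = 2) \<and> (v \<notin> V1 \<longrightarrow> count X v + dg E1 v = 0)" for v
    using lf_deg[OF l1, of v] unfolding x1 by simp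
  have q2: "(v \<in> V2 \<longrightarrow> count X v + dg E2 v = 2) \<and> (v \<notin> V2 \<longrightarrow> count X v + dg E2 v = 0)" for v
    using lf_deg[OF l2, of v] unfolding x2 by simp
  have p1: "even (count X v + dg E1 v)" for v
    using q1[of v] by (cases "v \<in> V1") simp_all
  have p2: "even (count X v + dg E2 v)" for v
    using q2[of v] by (cases "v \<in> V2") simp_all
  have "E1 \<subseteq> Pow V1" "finite V1" using s1 unfolding subgraph_def graph_def by auto
  then have f1: "finite E1" by (meson finite_Pow_iff finite_subset)
  have "E2 \<subseteq> Pow V2" "finite V2" using s2 unfolding subgraph_def graph_def by auto
  then have f2: "finite E2" by (meson finite_Pow_iff finite_subset)
  note fin = f1 f2
  have ev: "even (dg ((E1 - E2) \<union> (E2 - E1)) v)" for v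
  proof -
    define A where "A = {e\<in>E1. v \<in> e}"
    define B where "B = {e\<in>E2. v \<in> e}"
    have fA: "finite A" "finite B" unfolding A_def B_def using fin by simp_all
    have eq: "{e \<in> (E1 - E2) \<union> (E2 - E1). v \<in> e} = (A - B) \<union> (B - A)"
      unfolding A_def B_def by blast
    have c1: "card ((A - B) \<union> (B - A)) = card (A - B) + card (B - A)"
      by (rule card_Un_disjoint) (use fA in auto)
    have a: "card A = card (A - B) + card (A \<inter> B)"
    proof -
      have "card ((A - B) \<union> (A \<inter> B)) = card (A - B) + card (A \<inter> B)"
        by (rule card_Un_disjoint) (use fA in auto)
      moreover have "(A - B) \<union> (A \<inter> B) = A" by blast
      ultimately show ?thesis by simp
    qed
    have b: "card B = card (B - A) + card (A \<inter> B)"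
    proof -
      have "card ((B - A) \<union> (A \<inter> B)) = card (B - A) + card (A \<inter> B)"
        by (rule card_Un_disjoint) (use fA in auto)
      moreover have "(B - A) \<union> (A \<inter> B) = B" by blast
      ultimately show ?thesis by simp
    qed
    have y: "even (card A + card B)" using p1[of v] p2[of v] unfolding dg_def A_def B_def
      by (simp add: even_add)
    have "even (card (A - B) + card (B - A))"
    proof -
      have "card A + card B = (card (A - B) + card (B - A)) + 2 * card (A \<inter> B)"
        using a b by simp
      then show ?thesis using y by simp
    qed
    then show ?thesis unfolding dg_def eq c1 by assumption
  qed
  have E: "E1 = E2"
  proof (rule ccontr)
    assume "E1 \<noteq> E2"
    then have "(E1 - E2) \<union> (E2 - E1) \<noteq> {}" by auto
    moreover have "(E1 - E2) \<union> (E2 - E1) \<subseteq> E" using s1 s2 unfolding subgraph_def by auto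
    ultimately show False using forest_even[OF assms(1) _ _ ev] by simp
  qed
  have m1: "v \<in> V1 \<longleftrightarrow> count X v + dg E1 v \<noteq> 0" for v
    using q1[of v] by (cases "v \<in> V1") simp_all
  have m2: "v \<in> V2 \<longleftrightarrow> count X v + dg E2 v \<noteq> 0" for v
    using q2[of v] by (cases "v \<in> V2") simp_all
  have "V1 = V2" using m1 m2 E by (intro set_eqI) simp
  then show "V1 = V2 \<and> E1 = E2" using E by simp
qed

end
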